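(* Let $S=s_1,\ldots,s_n$ be a sequence of nonnegative integers, $\gamma>0$, $k$ a positive integer, $\epsilon>0$, and let $L$ be a level sequence. Let $0<\alpha<1$ and $0<\beta<1$, and let $\alpha',\beta'$ satisfy $\alpha^{1+\epsilon}\le\alpha'\le\alpha$ and $\beta^{1+\epsilon}\le\beta'\le\beta$. Then \[ \mathrm{score}_{\mathrm{geo}}(L,S;\alpha',\beta',\gamma)\le(1+\epsilon)\,\mathrm{score}_{\mathrm{geo}}(L,S;\alpha,\beta,\gamma). \]
   Context: A level sequence is $L=\ell_1,\ldots,\ell_n$ of integers with $0\le\ell_i\le k$; set $\ell_0=0$. The penalty is $\mathrm{pen}(x,y)=\max(y-x,0)\,\gamma\log n$. The geometric distribution is $p_{\mathrm{geo}}(s;\lambda)=(1-\lambda)\lambda^s$. $\mathrm{score}_{\mathrm{geo}}(L,S;\alpha,\beta,\gamma)=\sum_{i=1}^n\big[-\log p_{\mathrm{geo}}(s_i;\beta\alpha^{\ell_i})+\mathrm{pen}(\ell_{i-1},\ell_i)\big]$. *)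

theory Defs
  imports Complex_Main
begin

text \<open>Sequences are indexed 1..n as functions on nat; the level sequence
  uses the convention l_0 = 0.\<close>

definition level_seq :: "nat \<Rightarrow> nat \<Rightarrow> (nat \<Rightarrow> nat) \<Rightarrow> bool" where
  "level_seq n k L \<longleftrightarrow> (\<forall>i\<in>{1..n}. L i \<le> k)"

definition lev0 :: "(nat \<Rightarrow> nat) \<Rightarrow> nat \<Rightarrow> nat" where
  "lev0 L i = (if i = 0 then 0 else L i)"

definition pen :: "nat \<Rightarrow> real \<Rightarrow> nat \<Rightarrow> nat \<Rightarrow> real" where
  "pen n \<gamma> x y = max (real y - real x) 0 * \<gamma> * ln (real n)"

definition p_geo :: "nat \<Rightarrow> real \<Rightarrow> real" where
  "p_geo s lam = (1 - lam) * lam ^ s"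

definition score_geo :: "nat \<Rightarrow> (nat \<Rightarrow> nat) \<Rightarrow> (nat \<Rightarrow> nat) \<Rightarrow> real \<Rightarrow> real \<Rightarrow> real \<Rightarrow> real" where
  "score_geo n L S \<alpha> \<beta> \<gamma> =
     (\<Sum>i=1..n. - ln (p_geo (S i) (\<beta> * \<alpha> ^ (L i))) + pen n \<gamma> (lev0 L (i - 1)) (L i))"

end

theory Submission
  imports Defs
begin

lemma term_bound:
  fixes a b a' b' e :: real and l s :: nat
  assumes "e > 0" "0 < a" "a < 1" "0 < b" "b < 1"
    and "a powr (1 + e) \<le> a'" "a' \<le> a"
    and "b powr (1 + e) \<le> b'" "b' \<le> b"
  shows "- ln (p_geo s (b' * a' ^ l)) \<le> (1 + e) * (- ln (p_geo s (b * a ^ l)))"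
proof -
  have a'p: "a' > 0" proof -
    have "0 < a powr (1+e)" using assms(2) by simp
    thus ?thesis using assms(6) by linarith
  qed
  have b'p: "b' > 0" proof -
    have "0 < b powr (1+e)" using assms(4) by simp
    thus ?thesis using assms(8) by linarith
  qed
  have la: "ln a' \<ge> (1 + e) * ln a"
    using ln_le_cancel_iff[of "a powr (1+e)" a'] assms a'p by (simp add: ln_powr)
  have lb: "ln b' \<ge> (1 + e) * ln b"
    using ln_le_cancel_iff[of "b powr (1+e)" b'] assms b'p by (simp add: ln_powr)
  have lna: "ln a \<le> 0" using assms by simp
  define lam where "lam = b * a ^ l"
  define lam' where "lam' = b' * a' ^ l"
  have al: "a ^ l \<le> 1" using assms by (simp add: power_le_one)
  have lp: "0 < lam" "lam < 1" unfolding lam_def using assms al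
  proof -
    show "0 < b * a ^ l" using assms by simp
    have "b * a ^ l \<le> b * 1" using al assms(4) by (intro mult_left_mono) auto
    thus "b * a ^ l < 1" using assms(5) by linarith
  qed
  have lp': "0 < lam'" unfolding lam'_def using a'p b'p by simp
  have le: "lam' \<le> lam" unfolding lam_def lam'_def using assms a'p b'p
    by (intro mult_mono power_mono) auto
  have lnl: "ln lam = ln b + l * ln a" unfolding lam_def using assms by (simp add: ln_mult ln_realpow)
  have lnl': "ln lam' = ln b' + l * ln a'" unfolding lam'_def using a'p b'p by (simp add: ln_mult ln_realpow)
  have key: "ln lam' \<ge> (1 + e) * ln lam"
  proof -
    have "l * ln a' \<ge> l * ((1+e) * ln a)" using la by (intro mult_left_mono) auto
    thus ?thesis using lnl lnl' lb by (simp add: algebra_simps)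
  qed
  have lnlam: "ln lam \<le> 0" using lp by simp
  have g1: "- ln (1 - lam') \<le> - ln (1 - lam)" using lp lp' le by simp
  have g2: "- ln (1 - lam) \<ge> 0" using lp by simp
  have p1: "- ln (p_geo s lam') = - ln (1 - lam') - s * ln lam'"
    using lp lp' le unfolding p_geo_def by (simp add: ln_mult ln_realpow)
  have p2: "- ln (p_geo s lam) = - ln (1 - lam) - s * ln lam"
    using lp unfolding p_geo_def by (simp add: ln_mult ln_realpow)
  have m1: "real s * ((1+e) * ln lam) \<le> real s * ln lam'"
    by (rule mult_left_mono[OF key]) simp
  have m2: "(1+e) * (- ln (1 - lam)) - real s * ((1+e) * ln lam) = (1+e) * (- ln (1 - lam) - real s * ln lam)"
    by (simp only: algebra_simps)
  have m3: "0 \<le> e * (- ln (1 - lam))" using g2 assms(1) by (simp add: mult_nonneg_nonpos)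
  have m4: "(1+e) * (- ln (1 - lam)) = - ln (1 - lam) + e * (- ln (1 - lam))"
    by (simp only: algebra_simps)
  have "- ln (p_geo s lam') \<le> (1 + e) * (- ln (p_geo s lam))"
    unfolding p1 p2 using m1 m2 m3 m4 g1 by linarith
  thus ?thesis unfolding lam_def lam'_def .
qed

theorem lemma2:
  fixes n k :: nat and S L :: "nat \<Rightarrow> nat"
    and \<gamma> \<epsilon> \<alpha> \<beta> \<alpha>' \<beta>' :: real
  assumes "\<gamma> > 0" and "k > 0" and "\<epsilon> > 0"
    and "level_seq n k L"
    and "0 < \<alpha>" "\<alpha> < 1" "0 < \<beta>" "\<beta> < 1"
    and "\<alpha> powr (1 + \<epsilon>) \<le> \<alpha>'" "\<alpha>' \<le> \<alpha>"
    and "\<beta> powr (1 + \<epsilon>) \<le> \<beta>'" "\<beta>' \<le> \<beta>"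
  shows "score_geo n L S \<alpha>' \<beta>' \<gamma> \<le> (1 + \<epsilon>) * score_geo n L S \<alpha> \<beta> \<gamma>"
proof -
  have "score_geo n L S \<alpha>' \<beta>' \<gamma> \<le>
     (\<Sum>i=1..n. (1 + \<epsilon>) * (- ln (p_geo (S i) (\<beta> * \<alpha> ^ (L i))) + pen n \<gamma> (lev0 L (i - 1)) (L i)))"
    unfolding score_geo_def
  proof (rule sum_mono)
    fix i assume i: "i \<in> {1..n}"
    have t: "- ln (p_geo (S i) (\<beta>' * \<alpha>' ^ (L i))) \<le> (1 + \<epsilon>) * (- ln (p_geo (S i) (\<beta> * \<alpha> ^ (L i))))"
      by (rule term_bound[OF assms(3,5,6,7,8,9,10,11,12)])
    have "n \<ge> 1" using i by simp
    hence "ln (real n) \<ge> 0" by simp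
    hence pn: "pen n \<gamma> (lev0 L (i - 1)) (L i) \<ge> 0" unfolding pen_def using assms(1) by simp
    have "pen n \<gamma> (lev0 L (i - 1)) (L i) \<le> (1 + \<epsilon>) * pen n \<gamma> (lev0 L (i - 1)) (L i)"
      using pn assms(3) by (simp add: algebra_simps)
    thus "- ln (p_geo (S i) (\<beta>' * \<alpha>' ^ (L i))) + pen n \<gamma> (lev0 L (i - 1)) (L i)
      \<le> (1 + \<epsilon>) * (- ln (p_geo (S i) (\<beta> * \<alpha> ^ (L i))) + pen n \<gamma> (lev0 L (i - 1)) (L i))"
      using t by (simp add: algebra_simps)
  qed
  also have "\<dots> = (1 + \<epsilon>) * score_geo n L S \<alpha> \<beta> \<gamma>"
    unfolding score_geo_def by (simp add: sum_distrib_left)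
  finally show ?thesis .
qed

end
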